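(* Let $R$ be a unital associative simple algebra over an infinite field $F$ and let $p\in F[x]$ be a nonconstant polynomial. Then $$\mathrm{span}_F\{ab-ba\mid a,b\in R\}\subseteq \mathrm{span}_F\{p(ab)-p(ba)\mid a,b\in R\}.$$
   Context: $\mathrm{span}_F$ denotes the $F$-linear span. *)

theory Defs
  imports Main "HOL-Computational_Algebra.Polynomial"
begin

text \<open>An associative unital algebra over a field: the ring structure comes from the
type class ring_1 on 'r, the F-vector space structure from the scalar multiplication s,
and the two are compatible (bilinearity of multiplication).\<close>
definition algebra_over :: "('f::field \<Rightarrow> 'r::ring_1 \<Rightarrow> 'r) \<Rightarrow> bool" where
  "algebra_over s \<longleftrightarrow> module s \<and>
     (\<forall>c a b. s c (a * b) = s c a * b) \<and> (\<forall>c a b. s c (a * b) = a * s c b)"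

definition alg_ideal :: "('f::field \<Rightarrow> 'r::ring_1 \<Rightarrow> 'r) \<Rightarrow> 'r set \<Rightarrow> bool" where
  "alg_ideal s I \<longleftrightarrow> 0 \<in> I \<and> (\<forall>x\<in>I. \<forall>y\<in>I. x + y \<in> I) \<and> (\<forall>c. \<forall>x\<in>I. s c x \<in> I) \<and>
     (\<forall>r. \<forall>x\<in>I. r * x \<in> I \<and> x * r \<in> I)"

definition simple_algebra :: "('f::field \<Rightarrow> 'r::ring_1 \<Rightarrow> 'r) \<Rightarrow> bool" where
  "simple_algebra s \<longleftrightarrow> algebra_over s \<and> (1::'r) \<noteq> 0 \<and>
     (\<forall>I. alg_ideal s I \<longrightarrow> I = {0} \<or> I = UNIV)"

definition poly_alg :: "('f::field \<Rightarrow> 'r::ring_1 \<Rightarrow> 'r) \<Rightarrow> 'f poly \<Rightarrow> 'r \<Rightarrow> 'r" where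
  "poly_alg s p x = (\<Sum>i\<le>degree p. s (coeff p i) (x ^ i))"

end

theory Submission
  imports Defs
begin

locale salg =
  fixes s :: "'f::field \<Rightarrow> 'r::ring_1 \<Rightarrow> 'r"
  assumes alg: "algebra_over s"
begin

sublocale module s
  using alg unfolding algebra_over_def by blast

lemma sl[simp]: "s c a * b = s c (a * b)"
  using alg unfolding algebra_over_def by metis

lemma sr[simp]: "a * s c b = s c (a * b)"
  using alg unfolding algebra_over_def by metis

lemma s_pow: "(s c a) ^ n = s (c ^ n) (a ^ n)"
  by (induction n) (simp_all add: mult.commute)

lemma s_eq0: "s c x = 0 \<Longrightarrow> c \<noteq> 0 \<Longrightarrow> x = 0"
  by (metis scale_one scale_scale scale_zero_right field_class.field_inverse mult.commute)

lemma sub_scale_inv: "subspace W \<Longrightarrow> s c x \<in> W \<Longrightarrow> c \<noteq> 0 \<Longrightarrow> x \<in> W"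
  by (metis scale_one scale_scale subspace_scale field_class.field_inverse mult.commute)

definition pf :: "('f \<Rightarrow> 'r) \<Rightarrow> bool" where
  "pf G \<longleftrightarrow> (\<exists>N v. \<forall>l. G l = (\<Sum>i\<le>N. s (l ^ i) (v i)))"

lemma pf_mono: "pf (\<lambda>l. s (l ^ k) c)"
proof -
  have "\<And>l. (\<Sum>i\<le>k. s (l ^ i) (if i = k then c else 0)) = s (l ^ k) c"
  proof -
    fix l
    have "(\<Sum>i\<le>k. s (l ^ i) (if i = k then c else 0)) = (\<Sum>i\<le>k. if i = k then s (l ^ k) c else 0)"
      by (rule sum.cong) auto
    then show "(\<Sum>i\<le>k. s (l ^ i) (if i = k then c else 0)) = s (l ^ k) c" by simp
  qed
  then show ?thesis unfolding pf_def by (intro exI[of _ k] exI[of _ "\<lambda>i. if i = k then c else 0"]) simp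
qed

lemma pf_const: "pf (\<lambda>l. c)"
  using pf_mono[of 0 c] by simp

lemma pf_ext: "(\<Sum>i\<le>N. s (l ^ i) (v i)) = (\<Sum>i\<le>N + M. s (l ^ i) (if i \<le> N then v i else 0))"
  by (rule sum.mono_neutral_cong_left) auto

lemma pf_add: "pf G \<Longrightarrow> pf H \<Longrightarrow> pf (\<lambda>l. G l + H l)"
proof -
  assume "pf G" "pf H"
  then obtain N1 v1 N2 v2 where g: "\<And>l. G l = (\<Sum>i\<le>N1. s (l ^ i) (v1 i))"
    and h: "\<And>l. H l = (\<Sum>i\<le>N2. s (l ^ i) (v2 i))" unfolding pf_def by blast
  have "\<And>l. G l + H l = (\<Sum>i\<le>N1 + N2. s (l ^ i) ((if i \<le> N1 then v1 i else 0) + (if i \<le> N2 then v2 i else 0)))"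
    unfolding g h pf_ext[where N=N1 and v=v1 and M=N2] pf_ext[where N=N2 and v=v2 and M=N1]
    by (simp add: scale_right_distrib sum.distrib add.commute)
  then show ?thesis unfolding pf_def
    by (intro exI[of _ "N1 + N2"] exI[of _ "\<lambda>i. (if i \<le> N1 then v1 i else 0) + (if i \<le> N2 then v2 i else 0)"]) blast
qed

lemma pf_zero: "pf (\<lambda>l. 0)"
  using pf_const[of 0] .

lemma pf_sum: "finite A \<Longrightarrow> (\<And>a. a \<in> A \<Longrightarrow> pf (F a)) \<Longrightarrow> pf (\<lambda>l. \<Sum>a\<in>A. F a l)"
  by (induction A rule: finite_induct) (auto intro: pf_add pf_zero)

lemma pf_mult: "pf G \<Longrightarrow> pf H \<Longrightarrow> pf (\<lambda>l. G l * H l)"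
proof -
  assume "pf G" "pf H"
  then obtain N1 v1 N2 v2 where g: "\<And>l. G l = (\<Sum>i\<le>N1. s (l ^ i) (v1 i))"
    and h: "\<And>l. H l = (\<Sum>i\<le>N2. s (l ^ i) (v2 i))" unfolding pf_def by blast
  have e: "\<And>l. G l * H l = (\<Sum>i\<le>N1. \<Sum>j\<le>N2. s (l ^ (i + j)) (v1 i * v2 j))"
    unfolding g h sum_distrib_right sum_distrib_left by (subst sum.swap) (simp add: power_add mult.commute)
  have "pf (\<lambda>l. \<Sum>i\<le>N1. \<Sum>j\<le>N2. s (l ^ (i + j)) (v1 i * v2 j))"
    by (intro pf_sum pf_mono) auto
  then show ?thesis using e by simp
qed

lemma pf_scale: "pf G \<Longrightarrow> pf (\<lambda>l. s c (G l))"
  using pf_mult[OF pf_const[of "s c 1"]] by simp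

lemma pf_lscale: "pf G \<Longrightarrow> pf (\<lambda>l. s (l ^ k) (G l))"
  using pf_mult[OF pf_mono[of k 1]] by simp

lemma pf_diff: "pf G \<Longrightarrow> pf H \<Longrightarrow> pf (\<lambda>l. G l - H l)"
  using pf_add[of G "\<lambda>l. s (-1) (H l)"] pf_scale[of H "-1"] by simp

lemma coef_extract:
  assumes sub: "subspace W"
  shows "infinite S \<Longrightarrow> (\<forall>l\<in>S. (\<Sum>i\<le>N. s (l ^ i) (v i)) \<in> W) \<Longrightarrow> \<forall>i\<le>N. v i \<in> W"
proof (induction N arbitrary: v S)
  case 0
  then obtain l where "l \<in> S" by (metis finite.emptyI ex_in_conv)
  then show ?case using 0 by auto
next
  case (Suc N)
  from Suc.prems(1) obtain \<mu> where mu: "\<mu> \<in> S" by (metis finite.emptyI ex_in_conv)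
  define G where "G l = (\<Sum>i\<le>Suc N. s (l ^ i) (v i))" for l
  define w where "w j = (\<Sum>i\<in>{Suc j..Suc N}. s (\<mu> ^ (i - Suc j)) (v i))" for j
  have inf': "infinite (S - {\<mu>})" using Suc.prems(1) by simp
  have "\<forall>l\<in>S - {\<mu>}. (\<Sum>j\<le>N. s (l ^ j) (w j)) \<in> W"
  proof
    fix l assume l: "l \<in> S - {\<mu>}"
    then have ne: "l - \<mu> \<noteq> 0" by auto
    have inW: "s (inverse (l - \<mu>)) (G l - G \<mu>) \<in> W"
      using Suc.prems(2) l mu sub unfolding G_def
      by (intro subspace_scale subspace_diff) auto
    have "G l - G \<mu> = (\<Sum>i\<le>Suc N. s (l ^ i - \<mu> ^ i) (v i))"
      unfolding G_def by (simp add: scale_left_diff_distrib sum_subtractf)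
    also have "\<dots> = (\<Sum>i\<le>Suc N. s ((l - \<mu>) * (\<Sum>j<i. \<mu> ^ (i - Suc j) * l ^ j)) (v i))"
      by (simp add: power_diff_sumr2)
    finally have "s (inverse (l - \<mu>)) (G l - G \<mu>) = (\<Sum>i\<le>Suc N. s (inverse (l - \<mu>)) (s ((l - \<mu>) * (\<Sum>j<i. \<mu> ^ (i - Suc j) * l ^ j)) (v i)))"
      by (simp only: scale_sum_right)
    also have "\<dots> = (\<Sum>i\<le>Suc N. s (\<Sum>j<i. \<mu> ^ (i - Suc j) * l ^ j) (v i))"
    proof -
      have e: "\<And>X. inverse (l - \<mu>) * ((l - \<mu>) * X) = X" using ne by (simp add: mult.assoc[symmetric])
      show ?thesis by (simp only: scale_scale e)
    qed
    also have "\<dots> = (\<Sum>i\<le>Suc N. \<Sum>j<i. s (l ^ j) (s (\<mu> ^ (i - Suc j)) (v i)))"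
      by (simp add: scale_sum_left mult.commute)
    also have "\<dots> = (\<Sum>j<Suc N. \<Sum>i\<in>{Suc j..Suc N}. s (l ^ j) (s (\<mu> ^ (i - Suc j)) (v i)))"
      by (rule sum.nested_swap')
    also have "\<dots> = (\<Sum>j\<le>N. s (l ^ j) (w j))"
      unfolding w_def by (simp add: scale_sum_right lessThan_Suc_atMost scale_right_distrib)
    finally show "(\<Sum>j\<le>N. s (l ^ j) (w j)) \<in> W" using inW by simp
  qed
  from Suc.IH[OF inf' this] have "w N \<in> W" by simp
  then have vS: "v (Suc N) \<in> W" unfolding w_def by simp
  have "\<forall>l\<in>S. (\<Sum>i\<le>N. s (l ^ i) (v i)) \<in> W"
  proof
    fix l assume "l \<in> S"
    then have "G l - s (l ^ Suc N) (v (Suc N)) \<in> W"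
      using Suc.prems(2) vS sub unfolding G_def by (intro subspace_diff subspace_scale) auto
    then show "(\<Sum>i\<le>N. s (l ^ i) (v i)) \<in> W" unfolding G_def by simp
  qed
  from Suc.IH[OF Suc.prems(1) this] vS show ?case by (auto simp: le_Suc_eq)
qed

end

context salg
begin

definition P :: "('f \<Rightarrow> 'r) \<Rightarrow> 'r \<Rightarrow> 'r \<Rightarrow> bool" where
  "P G a0 a1 \<longleftrightarrow> (\<exists>H. pf H \<and> (\<forall>l. G l = a0 + s l a1 + s (l ^ 2) (H l)))"

lemma P_rep:
  assumes "P G a0 a1"
  shows "\<exists>N v. (\<forall>l. G l = (\<Sum>i\<le>N. s (l ^ i) (v i))) \<and> v 0 = a0 \<and> v 1 = a1 \<and> 1 \<le> N"
proof -
  obtain H where H: "pf H" and g: "\<And>l. G l = a0 + s l a1 + s (l ^ 2) (H l)"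
    using assms unfolding P_def by blast
  obtain M w where h: "\<And>l. H l = (\<Sum>i\<le>M. s (l ^ i) (w i))" using H unfolding pf_def by blast
  define v where "v i = (if i = 0 then a0 else if i = 1 then a1 else w (i - 2))" for i
  have "\<And>l. G l = (\<Sum>i\<le>Suc (Suc M). s (l ^ i) (v i))"
    unfolding g h sum.atMost_Suc_shift v_def
    by (simp add: scale_sum_right mult.commute power2_eq_square add.assoc mult.assoc)
  then show ?thesis unfolding v_def by (intro exI[of _ "Suc (Suc M)"] exI[of _ v]) (simp add: v_def)
qed

lemma P_extract:
  assumes "P G a0 a1" "subspace W" "infinite (UNIV :: 'f set)" "\<And>l. G l \<in> W"
  shows "a1 \<in> W"
proof -
  obtain N v where g: "\<And>l. G l = (\<Sum>i\<le>N. s (l ^ i) (v i))" and v: "v 1 = a1" "1 \<le> N"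
    using P_rep[OF assms(1)] by blast
  have "\<forall>i\<le>N. v i \<in> W"
    by (rule coef_extract[OF assms(2) assms(3)]) (use assms(4) g in auto)
  then show ?thesis using v by auto
qed

lemma P_cong: "P G a0 a1 \<Longrightarrow> (\<And>l. G' l = G l) \<Longrightarrow> a0' = a0 \<Longrightarrow> a1' = a1 \<Longrightarrow> P G' a0' a1'"
  unfolding P_def by simp

lemma P_const: "P (\<lambda>l. c) c 0"
  unfolding P_def by (intro exI[of _ "\<lambda>l. 0"]) (simp add: pf_zero)

lemma P_lin: "P (\<lambda>l. x + s l y) x y"
  unfolding P_def by (intro exI[of _ "\<lambda>l. 0"]) (simp add: pf_zero)

lemma P_add: "P G a0 a1 \<Longrightarrow> P H b0 b1 \<Longrightarrow> P (\<lambda>l. G l + H l) (a0 + b0) (a1 + b1)"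
  unfolding P_def
  apply (elim exE conjE)
  subgoal for G2 H2
    by (intro exI[of _ "\<lambda>l. G2 l + H2 l"]) (simp add: pf_add algebra_simps)
  done

lemma P_scale: "P G a0 a1 \<Longrightarrow> P (\<lambda>l. s c (G l)) (s c a0) (s c a1)"
  unfolding P_def
  apply (elim exE conjE)
  subgoal for G2
    by (intro exI[of _ "\<lambda>l. s c (G2 l)"]) (simp add: pf_scale algebra_simps mult.commute)
  done

lemma P_diff: "P G a0 a1 \<Longrightarrow> P H b0 b1 \<Longrightarrow> P (\<lambda>l. G l - H l) (a0 - b0) (a1 - b1)"
  using P_add[of G a0 a1 "\<lambda>l. s (-1) (H l)" "s (-1) b0" "s (-1) b1"] P_scale[of H b0 b1 "-1"]
  by simp

lemma P_mult:
  assumes "P G a0 a1" "P H b0 b1"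
  shows "P (\<lambda>l. G l * H l) (a0 * b0) (a0 * b1 + a1 * b0)"
proof -
  obtain G2 where G2: "pf G2" and g: "\<And>l. G l = a0 + s l a1 + s (l ^ 2) (G2 l)"
    using assms(1) unfolding P_def by blast
  obtain H2 where H2: "pf H2" and h: "\<And>l. H l = b0 + s l b1 + s (l ^ 2) (H2 l)"
    using assms(2) unfolding P_def by blast
  define R where "R l = a1 * b1 + a0 * H2 l + G2 l * b0 + s l (a1 * H2 l + G2 l * b1) + s (l ^ 2) (G2 l * H2 l)" for l
  have pR: "pf R" unfolding R_def
    by (intro pf_add pf_mult pf_const pf_lscale[where k=1, simplified] pf_lscale G2 H2)
  have "\<And>l. G l * H l = a0 * b0 + s l (a0 * b1 + a1 * b0) + s (l ^ 2) (R l)"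
    unfolding g h R_def
    by (simp add: algebra_simps power2_eq_square)
  then show ?thesis unfolding P_def using pR by blast
qed

lemma P_pow:
  assumes "P G a0 a1"
  shows "P (\<lambda>l. G l ^ m) (a0 ^ m) (\<Sum>j<m. a0 ^ j * a1 * a0 ^ (m - Suc j))"
proof (induction m)
  case 0
  then show ?case using P_const[of 1] by simp
next
  case (Suc m)
  have 1: "P (\<lambda>l. G l * G l ^ m) (a0 * a0 ^ m) (a0 * (\<Sum>j<m. a0 ^ j * a1 * a0 ^ (m - Suc j)) + a1 * a0 ^ m)"
    by (rule P_mult[OF assms Suc.IH])
  have 2: "a0 * (\<Sum>j<m. a0 ^ j * a1 * a0 ^ (m - Suc j)) + a1 * a0 ^ m
      = (\<Sum>j<Suc m. a0 ^ j * a1 * a0 ^ (Suc m - Suc j))"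
    unfolding sum.lessThan_Suc_shift by (simp add: sum_distrib_left mult.assoc)
  show ?case by (rule P_cong[OF 1]) (simp_all add: 2)
qed

lemma P_sum: "finite A \<Longrightarrow> (\<And>i. i \<in> A \<Longrightarrow> P (G i) (a i) (b i)) \<Longrightarrow>
    P (\<lambda>l. \<Sum>i\<in>A. G i l) (\<Sum>i\<in>A. a i) (\<Sum>i\<in>A. b i)"
proof (induction A rule: finite_induct)
  case empty
  then show ?case using P_const[of 0] by simp
next
  case (insert x F)
  then show ?case using P_add[of "G x" "a x" "b x" "\<lambda>l. \<Sum>i\<in>F. G i l"] by simp
qed

lemma P_poly:
  assumes "P X x0 x1"
  shows "P (\<lambda>l. poly_alg s p (X l)) (poly_alg s p x0)
           (\<Sum>i\<le>degree p. s (coeff p i) (\<Sum>j<i. x0 ^ j * x1 * x0 ^ (i - Suc j)))"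
  unfolding poly_alg_def
  by (intro P_sum P_scale P_pow assms) simp

end

definition cm :: "'r::ring_1 \<Rightarrow> 'r \<Rightarrow> 'r" where "cm x y = x * y - y * x"

definition Zc :: "'r::ring_1 set" where "Zc = {z. \<forall>y. z * y = y * z}"

locale sa = salg s for s :: "'f::field \<Rightarrow> 'r::ring_1 \<Rightarrow> 'r" +
  assumes simple: "simple_algebra s" and infF: "infinite (UNIV :: 'f set)"
begin

lemma one_neq_zero: "(1::'r) \<noteq> 0"
  using simple unfolding simple_algebra_def by blast

lemma ideal_cases: "alg_ideal s I \<Longrightarrow> I = {0} \<or> I = UNIV"
  using simple unfolding simple_algebra_def by blast

lemma Zc_sub: "subspace Zc"
  unfolding subspace_def Zc_def by (auto simp: algebra_simps)

lemma central_inv: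
  fixes z :: 'r
  assumes z: "z \<in> Zc" "z \<noteq> 0"
  shows "\<exists>w. z * w = 1 \<and> w * z = 1"
proof -
  let ?I = "range (\<lambda>r. z * r)"
  have idI: "alg_ideal s ?I"
    unfolding alg_ideal_def
  proof (intro conjI allI ballI)
    show "0 \<in> ?I" by (metis mult_zero_right rangeI)
    fix x y assume "x \<in> ?I" "y \<in> ?I"
    then obtain q1 q2 where "x = z * q1" "y = z * q2" by auto
    then have "x + y = z * (q1 + q2)" by (simp add: distrib_left)
    then show "x + y \<in> ?I" by (metis rangeI)
  next
    fix c x assume "x \<in> ?I"
    then obtain q where q: "x = z * q" by auto
    have "s c x = z * s c q" by (simp add: q)
    then show "s c x \<in> ?I" by (metis rangeI)
  next
    fix r x assume "x \<in> ?I"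
    then obtain q where q: "x = z * q" by auto
    have zr: "z * r = r * z" using z(1) unfolding Zc_def by blast
    have 1: "r * x = z * (r * q)" by (simp add: q mult.assoc[symmetric] zr)
    show "r * x \<in> ?I" unfolding 1 by (rule rangeI)
  next
    fix r x assume "x \<in> ?I"
    then obtain q where q: "x = z * q" by auto
    have 2: "x * r = z * (q * r)" unfolding q by (simp add: mult.assoc)
    show "x * r \<in> ?I" unfolding 2 by (rule rangeI)
  qed
  have "z \<in> ?I" by (metis mult_1_right rangeI)
  then have "?I \<noteq> {0}" using z(2) by blast
  then have "?I = UNIV" using ideal_cases[OF idI] by blast
  then have "1 \<in> ?I" by simp
  then obtain w where w: "1 = z * w" by blast
  moreover have "z * w = w * z" using z(1) unfolding Zc_def by blast
  ultimately show ?thesis by (intro exI[of _ w]) simp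
qed

lemma prime:
  fixes b c :: 'r
  assumes "\<And>y. b * y * c = 0"
  shows "b = 0 \<or> c = 0"
proof -
  let ?J = "{z::'r. \<forall>u. z * u * c = 0}"
  have "alg_ideal s ?J"
    unfolding alg_ideal_def
  proof (intro conjI allI ballI)
    show "0 \<in> ?J" by simp
    fix x y assume "x \<in> ?J" "y \<in> ?J"
    then show "x + y \<in> ?J" by (simp add: distrib_right)
  next
    fix d x assume "x \<in> ?J"
    then show "s d x \<in> ?J" by simp
  next
    fix r x assume x: "x \<in> ?J"
    have "r * x * u * c = 0" for u using x by (simp add: mult.assoc)
    then show "r * x \<in> ?J" by blast
  next
    fix r x assume x: "x \<in> ?J"
    have "x * r * u * c = 0" for u using x[unfolded mem_Collect_eq, rule_format, of "r * u"] by (simp add: mult.assoc)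
    then show "x * r \<in> ?J" by blast
  qed
  moreover have "b \<in> ?J" using assms by blast
  ultimately have "?J = {0} \<or> ?J = UNIV" using ideal_cases by blast
  then show ?thesis
  proof
    assume "?J = {0}" then show ?thesis using \<open>b \<in> ?J\<close> by blast
  next
    assume "?J = UNIV" then have "1 * 1 * c = 0" by blast
    then show ?thesis by simp
  qed
qed

end

context sa
begin

lemma L2a:
  fixes a :: 'r
  assumes aa: "a * a = 0" and an: "a \<noteq> 0" and pw: "\<forall>x::'r. x ^ Suc m \<in> Zc"
  shows "(a * y) ^ m * a = 0"
proof -
  define e where "e = a * y"
  have ae: "a * e = 0" unfolding e_def using aa by (simp add: mult.assoc[symmetric])
  have ea: "(e + a) ^ Suc k = e ^ Suc k + e ^ k * a" for k
  proof (induction k)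
    case 0 then show ?case by simp
  next
    case (Suc k)
    have "(e + a) ^ Suc (Suc k) = (e ^ Suc k + e ^ k * a) * (e + a)"
      using Suc by (simp only: power_Suc2)
    also have "\<dots> = e ^ Suc k * e + e ^ Suc k * a + e ^ k * (a * e) + e ^ k * (a * a)"
      by (simp add: algebra_simps)
    also have "\<dots> = e ^ Suc (Suc k) + e ^ Suc k * a"
      using ae aa by (simp only: power_Suc2) simp
    finally show ?case .
  qed
  have "e ^ m * a = (e + a) ^ Suc m - e ^ Suc m" using ea[of m] by simp
  then have zc: "e ^ m * a \<in> Zc" using pw Zc_sub by (simp add: subspace_diff)
  show ?thesis
  proof (rule ccontr)
    assume "(a * y) ^ m * a \<noteq> 0"
    then have "e ^ m * a \<noteq> 0" unfolding e_def .
    then obtain w where w: "w * (e ^ m * a) = 1" using central_inv[OF zc] by blast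
    have "a = w * (e ^ m * a) * a" using w by simp
    also have "\<dots> = 0" using aa by (simp add: mult.assoc)
    finally show False using an by simp
  qed
qed

lemma L2b:
  fixes a :: 'r
  assumes h: "\<forall>y. (a * y) ^ Suc i * a = 0"
  shows "(a * y) ^ i * a = 0"
proof -
  define X where "X = a * y"
  have hX: "X ^ Suc i * a = 0" unfolding X_def using h by blast
  have "(X ^ i * a) * w * (X ^ i * a) = 0" for w
  proof -
    define Y where "Y = a * (w * X ^ i)"
    define S where "S = (\<Sum>j<Suc i. X ^ j * Y * X ^ (Suc i - Suc j))"
    have P1: "P (\<lambda>l. a * (y + s l (w * X ^ i))) X Y"
      by (rule P_cong[OF P_lin[of X Y]]) (simp_all add: X_def Y_def distrib_left)
    have P2: "P (\<lambda>l. (a * (y + s l (w * X ^ i))) ^ Suc i * a) (X ^ Suc i * a) (X ^ Suc i * 0 + S * a)"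
      unfolding S_def by (rule P_mult[OF P_pow[OF P1] P_const])
    have "X ^ Suc i * 0 + S * a \<in> {0}"
      by (rule P_extract[OF P2 subspace_single_0 infF]) (use h in simp)
    then have Sa: "S * a = 0" by simp
    have t0: "X ^ j * Y * X ^ (Suc i - Suc j) * a = 0" if "j < i" for j
    proof -
      have ex: "i + (Suc i - Suc j) = (i - Suc j) + Suc i" using that by arith
      have "X ^ i * X ^ (Suc i - Suc j) = X ^ (i - Suc j) * X ^ Suc i"
        by (simp only: power_add[symmetric] ex)
      then have "X ^ j * Y * X ^ (Suc i - Suc j) * a = X ^ j * a * w * X ^ (i - Suc j) * (X ^ Suc i * a)"
        unfolding Y_def by (simp add: mult.assoc)
      then show ?thesis using hX by simp
    qed
    have "S * a = (\<Sum>j<i. X ^ j * Y * X ^ (Suc i - Suc j) * a) + X ^ i * Y * X ^ (Suc i - Suc i) * a"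
      unfolding S_def by (simp add: sum_distrib_right distrib_right)
    also have "\<dots> = X ^ i * Y * a" using t0 by simp
    finally show ?thesis using Sa unfolding Y_def by (simp add: mult.assoc)
  qed
  then have "X ^ i * a = 0" using prime by (metis mult.assoc)
  then show ?thesis unfolding X_def .
qed

lemma L2c: fixes a :: 'r shows "\<forall>y. (a * y) ^ m * a = 0 \<Longrightarrow> a = 0"
proof (induction m)
  case 0
  then have "(a * 1) ^ 0 * a = 0" by blast
  then show ?case by simp
next
  case (Suc m)
  then show ?case using L2b[of a m] by blast
qed

lemma L2:
  fixes a :: 'r
  assumes K1: "1 \<le> K" and pw: "\<forall>x::'r. x ^ K \<in> Zc" and aa: "a * a = 0"
  shows "a = 0"
proof (rule ccontr)
  assume an: "a \<noteq> 0"
  obtain m where K: "K = Suc m" using K1 by (cases K) auto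
  have "\<forall>y. (a * y) ^ m * a = 0" using L2a[OF aa an] pw K by blast
  then show False using L2c an by blast
qed

lemma L3:
  fixes x :: 'r
  assumes K1: "1 \<le> K" and pw: "\<forall>x::'r. x ^ K \<in> Zc" and xn: "x \<noteq> 0"
  shows "\<exists>x'. x * x' = 1 \<and> x' * x = 1"
proof (cases "x ^ K = 0")
  case False
  obtain w where w: "x ^ K * w = 1" "w * x ^ K = 1" using central_inv[OF _ False] pw by blast
  obtain m where K: "K = Suc m" using K1 by (cases K) auto
  have r: "x * (x ^ m * w) = 1" using w K by (simp add: mult.assoc)
  have l: "(w * x ^ m) * x = 1" using w K by (simp add: mult.assoc flip: power_Suc2)
  have "w * x ^ m = x ^ m * w"
  proof -
    have "w * x ^ m = (w * x ^ m) * (x * (x ^ m * w))" using r by simp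
    also have "\<dots> = ((w * x ^ m) * x) * (x ^ m * w)" by (simp add: mult.assoc)
    finally show ?thesis using l by simp
  qed
  then show ?thesis using r l by metis
next
  case True
  define m where "m = (LEAST m. x ^ m = 0)"
  have xm: "x ^ m = 0" unfolding m_def by (rule LeastI[of _ K]) (rule True)
  have "m \<noteq> 0"
  proof
    assume "m = 0" then have "x ^ 0 = 0" using xm by simp
    then show False using one_neq_zero by simp
  qed
  moreover have "m \<noteq> 1" using xm xn by auto
  ultimately obtain k where mk: "m = Suc (Suc k)" by (metis One_nat_def not0_implies_Suc)
  have bn: "x ^ Suc k \<noteq> 0"
    using not_less_Least[of "Suc k" "\<lambda>m. x ^ m = 0"] mk unfolding m_def by simp
  have "x ^ Suc k * x ^ Suc k = x ^ (Suc k + Suc k)" by (simp only: power_add)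
  also have "\<dots> = x ^ (m + k)" using mk by simp
  also have "\<dots> = x ^ m * x ^ k" by (simp only: power_add)
  finally have "x ^ Suc k * x ^ Suc k = x ^ m * x ^ k" .
  then have "x ^ Suc k * x ^ Suc k = 0" using xm by simp
  then have "x ^ Suc k = 0" using L2[OF K1 pw] by blast
  then show ?thesis using bn by blast
qed

lemma cm_alt: "(cm b ^^ j) x = (if even j then x else - x)" if "cm b x = - x"
  using that by (induction j) (auto simp: cm_def algebra_simps)

lemma Lstar:
  fixes x :: 'r
  assumes K1: "1 \<le> K" and pw: "\<forall>x::'r. x ^ K \<in> Zc"
    and M1: "1 \<le> M" and adn: "\<forall>x y::'r. (cm x ^^ M) y = 0"
  shows "x \<in> Zc"
proof (rule ccontr)
  assume xZ: "x \<notin> Zc"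
  then obtain y0 where y0: "cm x y0 \<noteq> 0" unfolding Zc_def cm_def by auto
  define j0 where "j0 = (LEAST j. (cm x ^^ Suc j) y0 = 0)"
  obtain M' where M': "M = Suc M'" using M1 by (cases M) auto
  have j0: "(cm x ^^ Suc j0) y0 = 0" unfolding j0_def by (rule LeastI[of _ M']) (use adn M' in blast)
  have "j0 \<noteq> 0"
  proof
    assume "j0 = 0" then have "(cm x ^^ Suc 0) y0 = 0" using j0 by simp
    then show False using y0 by simp
  qed
  then obtain j1 where j1: "j0 = Suc j1" by (metis not0_implies_Suc)
  define u where "u = (cm x ^^ Suc j1) y0"
  define w where "w = (cm x ^^ j1) y0"
  have un: "u \<noteq> 0" unfolding u_def
    using not_less_Least[of j1 "\<lambda>j. (cm x ^^ Suc j) y0 = 0"] j1 unfolding j0_def by simp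
  have du: "cm x u = 0" using j0 j1 unfolding u_def by simp
  have dw: "cm x w = u" unfolding u_def w_def by simp
  obtain u' where u': "u * u' = 1" "u' * u = 1" using L3[OF K1 pw un] by blast
  have xu: "x * u = u * x" using du unfolding cm_def by simp
  have xu': "x * u' = u' * x"
  proof -
    have "u' * x = u' * x * (u * u')" using u' by simp
    also have "\<dots> = u' * (x * u) * u'" by (simp add: mult.assoc)
    also have "\<dots> = (u' * u) * x * u'" using xu by (simp add: mult.assoc)
    finally show ?thesis using u' by simp
  qed
  define v where "v = u' * w"
  have xv: "x * v - v * x = 1"
  proof -
    have "x * v - v * x = u' * (x * w - w * x)" unfolding v_def
      by (simp add: right_diff_distrib mult.assoc[symmetric] xu')
    also have "\<dots> = 1" using dw u' unfolding cm_def by simp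
    finally show ?thesis .
  qed
  have "cm (x * v) x = - x"
  proof -
    have "cm (x * v) x = x * (v * x - x * v)" unfolding cm_def by (simp add: right_diff_distrib mult.assoc)
    also have "v * x - x * v = - (x * v - v * x)" by (rule minus_diff_eq[symmetric])
    also have "\<dots> = - 1" using xv by simp
    also have "x * (- 1) = - x" by simp
    finally show ?thesis .
  qed
  from cm_alt[OF this, of M] adn have "x = 0" by (auto split: if_splits)
  then show False using xZ unfolding Zc_def by simp
qed

end

context salg
begin

lemma binom1: "(1 + z) ^ m = (\<Sum>j\<le>m. s (of_nat (m choose j)) (z ^ j))"
proof (induction m)
  case 0
  then show ?case by simp
next
  case (Suc m)
  define S where "S = (\<Sum>j\<le>m. s (of_nat (m choose j)) (z ^ j))"
  have S1: "S = 1 + (\<Sum>j\<le>m. s (of_nat (m choose Suc j)) (z ^ Suc j))"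
  proof -
    have "(\<Sum>j\<le>Suc m. s (of_nat (m choose j)) (z ^ j)) = S"
      unfolding S_def by (simp add: binomial_eq_0)
    moreover have "(\<Sum>j\<le>Suc m. s (of_nat (m choose j)) (z ^ j)) = 1 + (\<Sum>j\<le>m. s (of_nat (m choose Suc j)) (z ^ Suc j))"
      by (subst sum.atMost_Suc_shift) simp
    ultimately show ?thesis by simp
  qed
  have Sz: "S * z = (\<Sum>j\<le>m. s (of_nat (m choose j)) (z ^ Suc j))"
    unfolding S_def sum_distrib_right by (simp add: power_commutes)
  have "(1 + z) ^ Suc m = S + S * z" using Suc unfolding S_def power_Suc2 by (simp add: distrib_left)
  also have "\<dots> = 1 + (\<Sum>j\<le>m. s (of_nat (Suc m choose Suc j)) (z ^ Suc j))"
    unfolding Sz unfolding S1 by (simp add: scale_left_distrib sum.distrib algebra_simps)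
  also have "\<dots> = (\<Sum>j\<le>Suc m. s (of_nat (Suc m choose j)) (z ^ j))"
    by (simp only: sum.atMost_Suc_shift) simp
  finally show ?case .
qed

lemma ad_formula:
  "(cm x ^^ j) y = (\<Sum>i\<le>j. s ((-1) ^ i * of_nat (j choose i)) (x ^ (j - i) * y * x ^ i))"
proof (induction j)
  case 0
  then show ?case by simp
next
  case (Suc j)
  define c where "c j i = ((-1) ^ i * of_nat (j choose i) :: 'f)" for j i
  define S where "S = (\<Sum>i\<le>j. s (c j i) (x ^ (j - i) * y * x ^ i))"
  have IH: "(cm x ^^ j) y = S" using Suc unfolding S_def c_def .
  have xS: "x * S = s (c j 0) (x ^ Suc j * y) + (\<Sum>i\<le>j. s (c j (Suc i)) (x ^ (j - i) * y * x ^ Suc i))"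
  proof -
    have "x * S = (\<Sum>i\<le>j. s (c j i) (x ^ (Suc j - i) * y * x ^ i))"
      unfolding S_def sum_distrib_left
      by (intro sum.cong refl) (simp add: mult.assoc[symmetric] Suc_diff_le)
    also have "\<dots> = (\<Sum>i\<le>Suc j. s (c j i) (x ^ (Suc j - i) * y * x ^ i))"
      by (simp add: c_def binomial_eq_0)
    also have "\<dots> = s (c j 0) (x ^ Suc j * y) + (\<Sum>i\<le>j. s (c j (Suc i)) (x ^ (j - i) * y * x ^ Suc i))"
      by (subst sum.atMost_Suc_shift) simp
    finally show ?thesis .
  qed
  have Sx: "S * x = (\<Sum>i\<le>j. s (c j i) (x ^ (j - i) * y * x ^ Suc i))"
    unfolding S_def sum_distrib_right by (simp add: mult.assoc power_commutes)
  have cS: "c (Suc j) (Suc i) = c j (Suc i) - c j i" for i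
    unfolding c_def by (simp add: algebra_simps)
  have "(cm x ^^ Suc j) y = x * S - S * x" using IH by (simp add: cm_def)
  also have "\<dots> = s (c (Suc j) 0) (x ^ Suc j * y) + (\<Sum>i\<le>j. s (c (Suc j) (Suc i)) (x ^ (j - i) * y * x ^ Suc i))"
    unfolding xS Sx cS by (simp add: c_def scale_left_diff_distrib sum_subtractf)
  also have "\<dots> = (\<Sum>i\<le>Suc j. s (c (Suc j) i) (x ^ (Suc j - i) * y * x ^ i))"
    by (simp only: sum.atMost_Suc_shift) simp
  finally show ?case unfolding c_def .
qed

end

locale sap = sa s for s :: "'f::field \<Rightarrow> 'r::ring_1 \<Rightarrow> 'r" +
  fixes p :: "'f poly"
  assumes degp: "degree p > 0"
begin

definition fg :: "'r \<Rightarrow> 'r \<Rightarrow> 'r" where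
  "fg a b = poly_alg s p (a * b) - poly_alg s p (b * a)"

definition W :: "'r set" where
  "W = span {poly_alg s p (a * b) - poly_alg s p (b * a) | a b. True}"

lemma W_sub: "subspace W" unfolding W_def by simp

lemma fg_W: "fg a b \<in> W"
  unfolding W_def fg_def by (rule span_base) blast

lemma Q_mult:
  assumes "P X x0 (cm r x0)" "P Y y0 (cm r y0)"
  shows "P (\<lambda>l. X l * Y l) (x0 * y0) (cm r (x0 * y0))"
  by (rule P_cong[OF P_mult[OF assms]]) (simp_all add: cm_def algebra_simps)

lemma Q_pow:
  assumes "P X x0 (cm r x0)"
  shows "P (\<lambda>l. X l ^ m) (x0 ^ m) (cm r (x0 ^ m))"
proof (induction m)
  case 0
  then show ?case using P_const[of 1] by (simp add: cm_def)
next
  case (Suc m)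
  show ?case by (rule P_cong[OF Q_mult[OF assms Suc]]) simp_all
qed

lemma Q_poly:
  assumes "P X x0 (cm r x0)"
  shows "P (\<lambda>l. poly_alg s p (X l)) (poly_alg s p x0) (cm r (poly_alg s p x0))"
proof -
  have "P (\<lambda>l. poly_alg s p (X l)) (poly_alg s p x0) (\<Sum>i\<le>degree p. s (coeff p i) (cm r (x0 ^ i)))"
    unfolding poly_alg_def by (intro P_sum P_scale Q_pow assms) simp
  moreover have "(\<Sum>i\<le>degree p. s (coeff p i) (cm r (x0 ^ i))) = cm r (poly_alg s p x0)"
    unfolding poly_alg_def cm_def sum_distrib_left sum_distrib_right
    by (simp add: scale_right_diff_distrib sum_subtractf)
  ultimately show ?thesis by simp
qed

lemma W_lie_gen: "cm r (fg a b) \<in> W"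
proof -
  have PA: "P (\<lambda>l. a + s l (cm r a)) a (cm r a)" by (rule P_lin)
  have PB: "P (\<lambda>l. b + s l (cm r b)) b (cm r b)" by (rule P_lin)
  have PG: "P (\<lambda>l. fg (a + s l (cm r a)) (b + s l (cm r b))) (fg a b) (cm r (fg a b))"
    unfolding fg_def
    by (rule P_cong[OF P_diff[OF Q_poly[OF Q_mult[OF PA PB]] Q_poly[OF Q_mult[OF PB PA]]]])
       (simp_all add: cm_def algebra_simps)
  show ?thesis by (rule P_extract[OF PG W_sub infF fg_W])
qed

lemma W_lie: "w \<in> W \<Longrightarrow> cm r w \<in> W"
proof -
  assume "w \<in> W"
  then have "w \<in> span {poly_alg s p (a * b) - poly_alg s p (b * a) | a b. True}" unfolding W_def .
  then show "cm r w \<in> W"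
  proof (induction rule: span_induct_alt)
    case base
    then show ?case using W_sub subspace_0 by (simp add: cm_def)
  next
    case (step c x y)
    then obtain a b where x: "x = fg a b" unfolding fg_def by blast
    have "cm r (s c x + y) = s c (cm r x) + cm r y" by (simp add: cm_def algebra_simps)
    then show ?case using step W_lie_gen[of r a b] x W_sub
      by (simp add: subspace_add subspace_scale)
  qed
qed

definition T :: "'r set" where "T = {t. \<forall>c. cm t c \<in> W}"

lemma T_sub: "subspace T"
proof (rule subspaceI)
  show "0 \<in> T" using W_sub subspace_0 unfolding T_def by (simp add: cm_def)
next
  fix x y assume x: "x \<in> T" and y: "y \<in> T"
  have "cm (x + y) c = cm x c + cm y c" for c by (simp add: cm_def algebra_simps)
  then show "x + y \<in> T" using x y W_sub unfolding T_def by (simp add: subspace_add)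
next
  fix c x assume x: "x \<in> T"
  have "cm (s c x) d = s c (cm x d)" for d by (simp add: cm_def scale_right_diff_distrib)
  then show "s c x \<in> T" using x W_sub unfolding T_def by (simp add: subspace_scale)
qed

lemma T_mult: "u \<in> T \<Longrightarrow> v \<in> T \<Longrightarrow> u * v \<in> T"
proof -
  assume u: "u \<in> T" and v: "v \<in> T"
  have "cm (u * v) c = cm u (v * c) + cm v (c * u)" for c by (simp add: cm_def algebra_simps)
  then show ?thesis using u v W_sub unfolding T_def by (simp add: subspace_add)
qed

lemma T_lie: "t \<in> T \<Longrightarrow> cm t r \<in> T"
proof -
  assume t: "t \<in> T"
  have "cm (cm t r) c = cm t (cm r c) - cm r (cm t c)" for c by (simp add: cm_def algebra_simps)
  then show ?thesis using t W_sub W_lie unfolding T_def by (simp add: subspace_diff)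
qed

lemma poly_T: "poly_alg s p a \<in> T"
  unfolding T_def mem_Collect_eq
proof
  fix c
  define A where "A = (\<Sum>i\<le>degree p. s (coeff p i) (\<Sum>j<i. a ^ j * (a * c) * a ^ (i - Suc j)))"
  define B where "B = (\<Sum>i\<le>degree p. s (coeff p i) (\<Sum>j<i. a ^ j * (c * a) * a ^ (i - Suc j)))"
  have PG: "P (\<lambda>l. fg a (1 + s l c)) (poly_alg s p a - poly_alg s p a) (A - B)"
    unfolding fg_def A_def B_def
    by (rule P_cong[OF P_diff[OF P_poly[OF P_lin] P_poly[OF P_lin]]]) (simp_all add: distrib_left distrib_right)
  have "A - B \<in> W" by (rule P_extract[OF PG W_sub infF fg_W])
  moreover have "A - B = cm (poly_alg s p a) c"
  proof -
    have tel: "(\<Sum>j<i. a ^ j * (a * c) * a ^ (i - Suc j)) - (\<Sum>j<i. a ^ j * (c * a) * a ^ (i - Suc j))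
        = a ^ i * c - c * a ^ i" for i
    proof -
      define h where "h j = a ^ j * c * a ^ (i - j)" for j
      have "(\<Sum>j<i. a ^ j * (a * c) * a ^ (i - Suc j)) - (\<Sum>j<i. a ^ j * (c * a) * a ^ (i - Suc j))
          = (\<Sum>j<i. h (Suc j) - h j)"
        unfolding sum_subtractf[symmetric]
      proof (intro sum.cong refl)
        fix j assume "j \<in> {..<i}"
        then have ji: "Suc (i - Suc j) = i - j" by simp
        have "a ^ j * (c * a) * a ^ (i - Suc j) = a ^ j * c * (a * a ^ (i - Suc j))" by (simp add: mult.assoc)
        also have "\<dots> = h j" unfolding h_def by (simp only: power_Suc[symmetric] ji)
        finally have 1: "a ^ j * (c * a) * a ^ (i - Suc j) = h j" .
        have "a ^ j * (a * c) * a ^ (i - Suc j) = (a ^ j * a) * c * a ^ (i - Suc j)" by (simp add: mult.assoc)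
        also have "\<dots> = h (Suc j)" unfolding h_def by (simp only: power_Suc2[symmetric])
        finally show "a ^ j * (a * c) * a ^ (i - Suc j) - a ^ j * (c * a) * a ^ (i - Suc j) = h (Suc j) - h j"
          using 1 by simp
      qed
      also have "\<dots> = h i - h 0" by (rule sum_lessThan_telescope)
      finally show ?thesis unfolding h_def by simp
    qed
    have "A - B = (\<Sum>i\<le>degree p. s (coeff p i) ((\<Sum>j<i. a ^ j * (a * c) * a ^ (i - Suc j)) - (\<Sum>j<i. a ^ j * (c * a) * a ^ (i - Suc j))))"
      unfolding A_def B_def by (simp only: scale_right_diff_distrib sum_subtractf)
    also have "\<dots> = (\<Sum>i\<le>degree p. s (coeff p i) (a ^ i * c - c * a ^ i))"
      by (simp only: tel)
    also have "\<dots> = cm (poly_alg s p a) c"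
      unfolding poly_alg_def cm_def sum_distrib_right sum_distrib_left
      by (simp add: scale_right_diff_distrib sum_subtractf)
    finally show ?thesis .
  qed
  ultimately show "cm (poly_alg s p a) c \<in> W" by simp
qed

lemma pow_T: "a ^ degree p \<in> T"
proof -
  have "\<forall>i\<le>degree p. s (coeff p i) (a ^ i) \<in> T"
  proof (rule coef_extract[OF T_sub infF], rule ballI)
    fix l :: 'f
    have e: "poly_alg s p (s l a) = (\<Sum>i\<le>degree p. s (l ^ i) (s (coeff p i) (a ^ i)))"
      unfolding poly_alg_def by (simp add: s_pow mult.commute)
    show "(\<Sum>i\<le>degree p. s (l ^ i) (s (coeff p i) (a ^ i))) \<in> T"
      unfolding e[symmetric] by (rule poly_T)
  qed
  then have "s (coeff p (degree p)) (a ^ degree p) \<in> T" by simp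
  moreover have "coeff p (degree p) \<noteq> 0" using degp by auto
  ultimately show ?thesis by (rule sub_scale_inv[OF T_sub])
qed

end

context sap
begin

definition K :: nat where "K = (LEAST k. 0 < k \<and> (\<forall>x::'r. x ^ k \<in> T))"

lemma K_props: "0 < K" "\<forall>x::'r. x ^ K \<in> T"
proof -
  have ex: "0 < degree p \<and> (\<forall>x::'r. x ^ degree p \<in> T)" using degp pow_T by blast
  have "0 < K \<and> (\<forall>x::'r. x ^ K \<in> T)" unfolding K_def by (rule LeastI[where P="\<lambda>k. 0 < k \<and> (\<forall>x::'r. x ^ k \<in> T)", OF ex])
  then show "0 < K" "\<forall>x::'r. x ^ K \<in> T" by auto
qed

lemma K_binom:
  assumes j: "0 < j" "j < K"
  shows "(of_nat (K choose j) :: 'f) = 0"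
proof (rule ccontr)
  assume nz: "(of_nat (K choose j) :: 'f) \<noteq> 0"
  have "\<forall>x::'r. x ^ j \<in> T"
  proof
    fix x :: 'r
    have "\<forall>i\<le>K. s (of_nat (K choose i)) (x ^ i) \<in> T"
    proof (rule coef_extract[OF T_sub infF], rule ballI)
      fix l :: 'f
      have e: "(1 + s l x) ^ K = (\<Sum>i\<le>K. s (l ^ i) (s (of_nat (K choose i)) (x ^ i)))"
        unfolding binom1 by (simp add: s_pow mult.commute)
      show "(\<Sum>i\<le>K. s (l ^ i) (s (of_nat (K choose i)) (x ^ i))) \<in> T"
        unfolding e[symmetric] using K_props(2) by blast
    qed
    then have "s (of_nat (K choose j)) (x ^ j) \<in> T" using j by simp
    then show "x ^ j \<in> T" by (rule sub_scale_inv[OF T_sub _ nz])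
  qed
  then have "K \<le> j" unfolding K_def using j(1) by (intro Least_le) blast
  then show False using j(2) by simp
qed

lemma neg1K: "((-1::'f) ^ K) = -1"
proof -
  have "(0::'f) = (-1 + 1) ^ K" using K_props(1) by simp
  also have "\<dots> = (\<Sum>k\<le>K. of_nat (K choose k) * (-1) ^ k * 1 ^ (K - k))" by (rule binomial_ring)
  also have "\<dots> = (\<Sum>k\<in>{0, K}. of_nat (K choose k) * (-1) ^ k * 1 ^ (K - k))"
    by (rule sum.mono_neutral_right) (use K_binom in auto)
  also have "\<dots> = 1 + (-1) ^ K" using K_props(1) by simp
  finally show ?thesis by (simp add: eq_neg_iff_add_eq_0 add.commute)
qed

lemma adK: fixes x y :: 'r shows "(cm x ^^ K) y = cm (x ^ K) y"
proof -
  have "(cm x ^^ K) y = (\<Sum>i\<le>K. s ((-1) ^ i * of_nat (K choose i)) (x ^ (K - i) * y * x ^ i))"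
    by (rule ad_formula)
  also have "\<dots> = (\<Sum>i\<in>{0, K}. s ((-1) ^ i * of_nat (K choose i)) (x ^ (K - i) * y * x ^ i))"
    by (rule sum.mono_neutral_right) (use K_binom in auto)
  also have "\<dots> = cm (x ^ K) y" using K_props(1) by (simp add: neg1K cm_def)
  finally show ?thesis .
qed

lemma T_cases: "T = UNIV \<or> (\<forall>a\<in>T. \<forall>b\<in>T. a * b = b * a)"
proof -
  define I where "I = {z::'r. \<forall>u v. u * z * v \<in> T}"
  have idI: "alg_ideal s I"
    unfolding alg_ideal_def
  proof (intro conjI allI ballI)
    show "0 \<in> I" unfolding I_def using T_sub subspace_0 by simp
  next
    fix x y assume "x \<in> I" "y \<in> I"
    then show "x + y \<in> I" unfolding I_def using T_sub by (simp add: distrib_left distrib_right subspace_add)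
  next
    fix c x assume "x \<in> I"
    then show "s c x \<in> I" unfolding I_def using T_sub by (simp add: subspace_scale)
  next
    fix r x assume "x \<in> I"
    then show "r * x \<in> I" unfolding I_def by (simp add: mult.assoc[symmetric])
  next
    fix r x assume x: "x \<in> I"
    have "u * (x * r) * v \<in> T" for u v using x[unfolded I_def mem_Collect_eq, rule_format, of u "r * v"]
      by (simp add: mult.assoc)
    then show "x * r \<in> I" unfolding I_def by blast
  qed
  show ?thesis
  proof (cases "I = UNIV")
    case True
    have "z \<in> T" for z using True unfolding I_def by (metis (mono_tags) UNIV_I mem_Collect_eq mult_1_left mult_1_right)
    then show ?thesis by blast
  next
    case False
    then have I0: "I = {0}" using ideal_cases[OF idI] by blast
    have "cm a b \<in> I" if a: "a \<in> T" and b: "b \<in> T" for a b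
    proof -
      have right: "cm a b * v \<in> T" for v
      proof -
        have "cm a b * v = cm a (b * v) - b * cm a v" by (simp add: cm_def algebra_simps)
        then show ?thesis using T_lie[OF a] T_mult[OF b T_lie[OF a]] T_sub by (simp add: subspace_diff)
      qed
      have "u * (cm a b * v) \<in> T" for u v
      proof -
        have "u * (cm a b * v) = cm a b * v * u - cm (cm a b * v) u" by (simp add: cm_def)
        also have "\<dots> = cm a b * (v * u) - cm (cm a b * v) u" by (simp add: mult.assoc)
        finally show ?thesis using right T_lie[OF right] T_sub by (simp add: subspace_diff)
      qed
      then show ?thesis unfolding I_def by (simp add: mult.assoc)
    qed
    then have "a * b = b * a" if "a \<in> T" "b \<in> T" for a b using that I0 by (force simp: cm_def)
    then show ?thesis by blast
  qed
qed

end

context sap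
begin

lemma sq0: "\<forall>a\<in>T. \<forall>b\<in>T. a * b = b * a \<Longrightarrow> t \<in> T \<Longrightarrow> cm t (cm t r) = 0"
proof -
  assume comm: "\<forall>a\<in>T. \<forall>b\<in>T. a * b = b * a" and t: "t \<in> T"
  have "cm t r \<in> T" by (rule T_lie[OF t])
  then have "t * cm t r = cm t r * t" using comm t by auto
  then show ?thesis by (simp add: cm_def)
qed

lemma two_zero: "(2::'f) = 0 \<Longrightarrow> (z::'r) + z = 0"
proof -
  assume h: "(2::'f) = 0"
  have "z + z = s (1 + 1) z" by (simp only: scale_left_distrib scale_one)
  also have "\<dots> = 0" using h by simp
  finally show ?thesis .
qed

lemma bad_sq:
  assumes comm: "\<forall>a\<in>T. \<forall>b\<in>T. a * b = b * a" and t: "t \<in> T"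
  shows "t * t \<in> Zc"
proof (cases "(2::'f) = 0")
  case True
  have "t * t * r = r * (t * t)" for r
  proof -
    have "t * (t * r - r * t) - (t * r - r * t) * t = 0" using sq0[OF comm t, of r] by (simp add: cm_def)
    then have e: "t * t * r + r * t * t - (t * r * t + t * r * t) = 0" by (simp add: algebra_simps)
    have "t * r * t + t * r * t = 0" by (rule two_zero[OF True])
    then have "t * t * r + r * t * t = 0" using e by simp
    moreover have "r * t * t + r * t * t = 0" by (rule two_zero[OF True])
    ultimately have "t * t * r = r * t * t" by (metis add_right_cancel)
    then show ?thesis by (simp add: mult.assoc)
  qed
  then show ?thesis unfolding Zc_def by simp
next
  case False
  have lb: "cm t (r * w) = cm t r * w + r * cm t w" for r w by (simp add: cm_def algebra_simps)
  have prod0: "cm t r * cm t w = 0" for r w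
  proof -
    have "cm t (cm t (r * w)) = cm t (cm t r) * w + (cm t r * cm t w + cm t r * cm t w) + r * cm t (cm t w)"
      by (simp add: cm_def algebra_simps)
    then have "cm t r * cm t w + cm t r * cm t w = 0" using sq0[OF comm t] by simp
    moreover have "s (1 + 1) (cm t r * cm t w) = cm t r * cm t w + cm t r * cm t w"
      by (simp only: scale_left_distrib scale_one)
    ultimately have "s (1 + 1) (cm t r * cm t w) = 0" by simp
    moreover have "(1 + 1 :: 'f) \<noteq> 0" using False by simp
    ultimately show ?thesis using s_eq0 by blast
  qed
  have "cm t r = 0" for r
  proof -
    have "cm t r * w * cm t y = 0" for w y
    proof -
      have "cm t r * cm t (w * y) = cm t r * cm t w * y + cm t r * w * cm t y"
        unfolding lb by (simp add: distrib_left mult.assoc)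
      then show ?thesis using prod0 by simp
    qed
    then show ?thesis using prime by blast
  qed
  then have tz: "t \<in> Zc" unfolding Zc_def cm_def by simp
  have "t * t * y = y * (t * t)" for y
  proof -
    have ty: "t * y = y * t" using tz unfolding Zc_def by blast
    have "t * t * y = t * (t * y)" by (simp add: mult.assoc)
    also have "\<dots> = t * (y * t)" by (simp only: ty)
    also have "\<dots> = (t * y) * t" by (simp only: mult.assoc)
    also have "\<dots> = (y * t) * t" by (simp only: ty)
    also have "\<dots> = y * (t * t)" by (simp add: mult.assoc)
    finally show ?thesis .
  qed
  then show ?thesis unfolding Zc_def by simp
qed

end

context sap
begin

lemma bad_central:
  assumes comm: "\<forall>a\<in>T. \<forall>b\<in>T. a * b = b * a"
  shows "(x::'r) \<in> Zc"
proof -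
  have pw: "\<forall>x::'r. x ^ (K + K) \<in> Zc"
  proof
    fix x :: 'r
    have "x ^ K \<in> T" using K_props(2) by blast
    then have "x ^ K * x ^ K \<in> Zc" by (rule bad_sq[OF comm])
    then show "x ^ (K + K) \<in> Zc" by (simp add: power_add)
  qed
  have adn: "\<forall>x y::'r. (cm x ^^ (K + K)) y = 0"
  proof (intro allI)
    fix x y :: 'r
    have "(cm x ^^ (K + K)) y = (cm x ^^ K) ((cm x ^^ K) y)" by (simp add: funpow_add)
    also have "\<dots> = cm (x ^ K) (cm (x ^ K) y)" by (simp add: adK)
    also have "\<dots> = 0" using sq0[OF comm] K_props(2) by blast
    finally show "(cm x ^^ (K + K)) y = 0" .
  qed
  have "1 \<le> K + K" using K_props(1) by simp
  then show ?thesis using Lstar[OF _ pw _ adn] by blast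
qed

lemma comm_in_W: "a * b - b * a \<in> W"
proof (cases "T = UNIV")
  case True
  then have "a \<in> T" by blast
  then show ?thesis unfolding T_def cm_def by blast
next
  case False
  then have "\<forall>a\<in>T. \<forall>b\<in>T. a * b = b * a" using T_cases by blast
  then have "a \<in> Zc" by (rule bad_central)
  then show ?thesis unfolding Zc_def using W_sub subspace_0 by simp
qed

end

theorem corollary4p9:
  fixes s :: "'f::field \<Rightarrow> 'r::ring_1 \<Rightarrow> 'r" and p :: "'f poly"
  assumes "simple_algebra s"
    and "infinite (UNIV :: 'f set)"
    and "degree p > 0"
  shows "module.span s {a * b - b * a | a b. True}
           \<subseteq> module.span s {poly_alg s p (a * b) - poly_alg s p (b * a) | a b. True}"
proof -
  interpret sap s p
    using assms by unfold_locales (auto simp: simple_algebra_def)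
  have "{a * b - b * a | a b. True} \<subseteq> W" using comm_in_W by blast
  then have "span {a * b - b * a | a b. True} \<subseteq> W" by (rule span_minimal[OF _ W_sub])
  then show ?thesis unfolding W_def .
qed

end
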